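(* Let $K = \mathbb{Q}(\sqrt{-7})$, $\theta = \frac{1+\sqrt{-7}}{2}$ and $\theta' = 1 - \theta = \frac{1-\sqrt{-7}}{2}$, viewed in the ring of integers $\mathcal{O}_K$. Let $m_1, m_2 \in \mathbb{N}$ be odd with $m_1 \geq 3$, $m_2 \geq 3$ and $m_1 \equiv m_2 \pmod{42}$, and suppose $1 - 2\theta = \theta^{m_1} - \theta'^{m_1}$ and $1 - 2\theta = \theta^{m_2} - \theta'^{m_2}$. Then $m_1 = m_2$.
   Context: $\sqrt{-7}$ is a fixed square root of $-7$ in $K$; $\theta$ is a root of $X^2 - X + 2$ and lies in $\mathcal{O}_K$. *)

theory Defs
  imports Complex_Main "HOL-Number_Theory.Cong"
begin

text \<open>We realise K = Q(sqrt(-7)) inside the complex numbers, fixing the square root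
  sqrt(-7) = i * sqrt 7.  O_K embeds into C, so equations in O_K are equations in C.\<close>

definition sqrt_m7 :: complex where
  "sqrt_m7 = \<i> * complex_of_real (sqrt 7)"

definition theta :: complex where
  "theta = (1 + sqrt_m7) / 2"

definition theta' :: complex where
  "theta' = 1 - theta"

end

theory Submission
  imports Defs
begin

fun stp :: "int \<times> int \<Rightarrow> int \<times> int" where "stp (a, b) = (a - 7 * b, a + b)"

fun AB :: "nat \<Rightarrow> int \<times> int" where
  "AB 0 = (1, 0)"
| "AB (Suc n) = stp (AB n)"

definition AA :: "nat \<Rightarrow> int" where "AA n = fst (AB n)"
definition BB :: "nat \<Rightarrow> int" where "BB n = snd (AB n)"

lemma AA_Suc: "AA (Suc n) = AA n - 7 * BB n" by (cases "AB n") (simp add: AA_def BB_def)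
lemma BB_Suc: "BB (Suc n) = AA n + BB n" by (cases "AB n") (simp add: AA_def BB_def)
lemma AA_0: "AA 0 = 1" by (simp add: AA_def)
lemma BB_0: "BB 0 = 0" by (simp add: BB_def)

lemma pi_sq: "sqrt_m7 * sqrt_m7 = -7"
proof -
  have h: "complex_of_real (sqrt 7) * complex_of_real (sqrt 7) = 7"
    by (simp flip: of_real_mult)
  have "sqrt_m7 * sqrt_m7 = (\<i> * \<i>) * (complex_of_real (sqrt 7) * complex_of_real (sqrt 7))"
    unfolding sqrt_m7_def by (simp only: ac_simps)
  also have "\<dots> = -7" by (simp only: h) simp
  finally show ?thesis .
qed

lemma pi_nz: "sqrt_m7 \<noteq> 0"
  by (simp add: sqrt_m7_def)

lemma repr_unique:
  assumes "of_int a + of_int b * sqrt_m7 = of_int c + of_int d * sqrt_m7"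
  shows "a = c \<and> b = d"
proof -
  have "Im (of_int a + of_int b * sqrt_m7) = Im (of_int c + of_int d * sqrt_m7)"
    using assms by simp
  hence "b * sqrt 7 = d * sqrt 7" by (simp add: sqrt_m7_def)
  hence bd: "b = d" by simp
  have "Re (of_int a + of_int b * sqrt_m7) = Re (of_int c + of_int d * sqrt_m7)"
    using assms by simp
  hence "a = c" by (simp add: sqrt_m7_def)
  with bd show ?thesis by simp
qed

lemma pow_repr: "(1 + sqrt_m7) ^ n = of_int (AA n) + of_int (BB n) * sqrt_m7"
proof (induction n)
  case 0 then show ?case by (simp add: AA_0 BB_0)
next
  case (Suc n)
  have "(1 + sqrt_m7) ^ Suc n = (of_int (AA n) + of_int (BB n) * sqrt_m7) * (1 + sqrt_m7)"
    using Suc by simp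
  also have "\<dots> = of_int (AA n) + (of_int (AA n) + of_int (BB n)) * sqrt_m7 + of_int (BB n) * (sqrt_m7 * sqrt_m7)"
    by (simp add: algebra_simps)
  also have "\<dots> = of_int (AA (Suc n)) + of_int (BB (Suc n)) * sqrt_m7"
    by (simp add: pi_sq AA_Suc BB_Suc algebra_simps)
  finally show ?case .
qed

lemma cnj_pi: "cnj sqrt_m7 = - sqrt_m7"
  by (simp add: sqrt_m7_def)

lemma pow_repr': "(1 - sqrt_m7) ^ n = of_int (AA n) - of_int (BB n) * sqrt_m7"
proof -
  have "cnj ((1 + sqrt_m7) ^ n) = (1 - sqrt_m7) ^ n"
    by (simp add: cnj_pi)
  moreover have "cnj ((1 + sqrt_m7) ^ n) = of_int (AA n) - of_int (BB n) * sqrt_m7"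
    by (simp add: pow_repr cnj_pi)
  ultimately show ?thesis by simp
qed

lemma AA_mod: "[AA n = 1] (mod 7)"
proof (induction n)
  case 0 then show ?case by (simp add: AA_0)
next
  case (Suc n)
  have "[AA n - 7 * BB n = AA n] (mod 7)"
    by (simp add: cong_iff_dvd_diff)
  then show ?case using Suc by (simp add: AA_Suc cong_trans)
qed

lemma add_formula:
  "AA (m + n) = AA m * AA n - 7 * BB m * BB n \<and> BB (m + n) = AA m * BB n + BB m * AA n"
proof -
  have "(1 + sqrt_m7) ^ (m + n) = (1 + sqrt_m7) ^ m * (1 + sqrt_m7) ^ n"
    by (simp add: power_add)
  also have "\<dots> = (of_int (AA m) + of_int (BB m) * sqrt_m7) * (of_int (AA n) + of_int (BB n) * sqrt_m7)"
    by (simp add: pow_repr)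
  also have "\<dots> = of_int (AA m) * of_int (AA n) + of_int (BB m) * of_int (BB n) * (sqrt_m7 * sqrt_m7)
      + (of_int (AA m) * of_int (BB n) + of_int (BB m) * of_int (AA n)) * sqrt_m7"
    by (simp add: algebra_simps)
  also have "\<dots> = of_int (AA m * AA n - 7 * BB m * BB n) + of_int (AA m * BB n + BB m * AA n) * sqrt_m7"
    by (simp add: pi_sq algebra_simps)
  finally show ?thesis using repr_unique pow_repr by metis
qed

lemma hyp_transform:
  assumes "1 - 2 * theta = theta ^ m - theta' ^ m"
  shows "2 * BB m = - (2 ^ m)"
proof -
  have t: "theta = (1 + sqrt_m7) / 2" by (simp add: theta_def)
  have t': "theta' = (1 - sqrt_m7) / 2" by (simp add: theta'_def theta_def field_simps)
  have "theta ^ m - theta' ^ m = ((1 + sqrt_m7) ^ m - (1 - sqrt_m7) ^ m) / 2 ^ m"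
    unfolding t t' power_divide by (simp add: diff_divide_distrib)
  also have "\<dots> = 2 * of_int (BB m) * sqrt_m7 / 2 ^ m"
    by (simp add: pow_repr pow_repr')
  finally have calc: "theta ^ m - theta' ^ m = 2 * of_int (BB m) * sqrt_m7 / 2 ^ m" .
  have tt: "2 * theta = 1 + sqrt_m7" unfolding theta_def by simp
  have e: "1 - 2 * theta = - sqrt_m7" unfolding tt by simp
  have "- sqrt_m7 = 2 * of_int (BB m) * sqrt_m7 / 2 ^ m"
    using assms e calc by simp
  hence "- sqrt_m7 * 2 ^ m = 2 * of_int (BB m) * sqrt_m7" by (simp add: field_simps)
  hence "(- (2 ^ m) - 2 * of_int (BB m)) * sqrt_m7 = 0" by (simp add: algebra_simps)
  hence "(2 * of_int (BB m) :: complex) = - (2 ^ m)" using pi_nz by simp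
  hence "(of_int (2 * BB m) :: complex) = of_int (- (2 ^ m))" by simp
  thus ?thesis using of_int_eq_iff by blast
qed

lemma step_identity:
  fixes c C1 K M r x y u w :: int
  assumes "M = 7 * r"
  shows "(c * C1 + K * C1 * (7 * M) * x + 49 * M * u) * (c + 7 * M * x) - 7 * (K * C1 * M * y + 49 * M * w) * (M * y)
     = c * (c * C1) + (K + 1) * (c * C1) * (7 * M) * x + 49 * M * (K * C1 * M * x^2 + u * c + 7 * M * u * x - K * C1 * r * y^2 - 7 * M * w * y)"
    and "(c * C1 + K * C1 * (7 * M) * x + 49 * M * u) * (M * y) + (K * C1 * M * y + 49 * M * w) * (c + 7 * M * x)
     = (K + 1) * (c * C1) * M * y + 49 * M * (2 * K * C1 * r * x * y + M * u * y + w * c + 7 * M * w * x)"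
  using assms by (simp_all add: algebra_simps power2_eq_square)

lemma pow_step:
  fixes n j :: nat and x y :: int
  assumes j: "j \<ge> 1" and hA: "AA n = 2^n + 7^(j+1)*x" and hB: "BB n = 7^j * y"
  shows "k \<ge> 1 \<Longrightarrow> \<exists>u w. AA (k*n) = 2^(k*n) + int k * 2^(n*(k-1)) * 7^(j+1) * x + 7^(j+2)*u
             \<and> BB (k*n) = int k * 2^(n*(k-1)) * 7^j * y + 7^(j+2) * w"
proof (induction k)
  case 0 then show ?case by simp
next
  case (Suc k)
  show ?case
  proof (cases "k = 0")
    case True
    then show ?thesis using hA hB by (intro exI[of _ 0]) simp
  next
    case False
    then obtain u w where
      u: "AA (k*n) = 2^(k*n) + int k * 2^(n*(k-1)) * 7^(j+1) * x + 7^(j+2)*u" and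
      w: "BB (k*n) = int k * 2^(n*(k-1)) * 7^j * y + 7^(j+2) * w"
      using Suc by auto
    define M :: int where "M = 7^j"
    define r :: int where "r = 7^(j-1)"
    define c :: int where "c = 2^n"
    define C1 :: int where "C1 = 2^(n*(k-1))"
    define K :: int where "K = int k"
    have Mr: "M = 7 * r" unfolding M_def r_def using j
      by (metis Suc_diff_le diff_Suc_1 power_Suc)
    have M1: "(7::int)^(j+1) = 7 * M" by (simp add: M_def)
    have M2: "(7::int)^(j+2) = 49 * M" by (simp add: M_def)
    have ck: "(2::int)^(k*n) = c * C1" unfolding c_def C1_def using False
      by (metis One_nat_def Suc_pred mult.commute mult_Suc_right neq0_conv power_add)
    have ck1: "(2::int)^(Suc k*n) = c * (c * C1)" using ck by (simp add: c_def power_add)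
    have ck2: "(2::int)^(n*(Suc k - 1)) = c * C1" using ck by (simp add: mult.commute)
    have A1: "AA n = c + 7 * M * x" unfolding hA M1 c_def by (simp only: mult.assoc)
    have B1: "BB n = M * y" unfolding hB M_def by (rule refl)
    have M0: "(7::int)^j = M" by (simp add: M_def)
    have Ak: "AA (k*n) = c * C1 + K * C1 * (7 * M) * x + 49 * M * u"
      using u unfolding ck M1 M2 K_def C1_def by (simp only: mult.assoc)
    have Bk: "BB (k*n) = K * C1 * M * y + 49 * M * w"
      using w unfolding M0 M2 K_def C1_def by (simp only: mult.assoc)
    have sk: "Suc k * n = k * n + n" by simp
    have AS: "AA (Suc k * n) = AA (k*n) * AA n - 7 * BB (k*n) * BB n"
      and BS: "BB (Suc k * n) = AA (k*n) * BB n + BB (k*n) * AA n"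
      unfolding sk using add_formula[of "k*n" n] by blast+
    have "AA (Suc k * n) = c * (c * C1) + (K + 1) * (c * C1) * (7 * M) * x + 49 * M * (K * C1 * M * x^2 + u * c + 7 * M * u * x - K * C1 * r * y^2 - 7 * M * w * y)"
      unfolding AS Ak A1 Bk B1 by (rule step_identity(1)[OF Mr])
    moreover have "BB (Suc k * n) = (K + 1) * (c * C1) * M * y + 49 * M * (2 * K * C1 * r * x * y + M * u * y + w * c + 7 * M * w * x)"
      unfolding BS Ak A1 Bk B1 by (rule step_identity(2)[OF Mr])
    moreover have KS: "int (Suc k) = K + 1" by (simp add: K_def)
    ultimately show ?thesis
      apply (simp only: ck1 ck2 M1 M2 M0 KS)
      by (intro exI[of _ "K * C1 * M * x^2 + u * c + 7 * M * u * x - K * C1 * r * y^2 - 7 * M * w * y"]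
          exI[of _ "2 * K * C1 * r * x * y + M * u * y + w * c + 7 * M * w * x"])
         (simp add: mult.assoc)
  qed
qed

lemma AB21: "AB 21 = (2930769920, 300941312)"
  by (simp add: eval_nat_numeral)

lemma prime7nat: "prime (7::nat)" unfolding prime_nat_iff'
proof (intro conjI ballI)
  fix n :: nat assume "n \<in> {2..<7}"
  hence "n = 2 \<or> n = 3 \<or> n = 4 \<or> n = 5 \<or> n = 6" by auto
  thus "\<not> n dvd 7" by auto
qed simp

lemma prime7: "prime (7::int)"
  using prime7nat prime_nat_int_transfer[of 7] by simp

lemma not7_pow2: "\<not> (7::int) dvd 2 ^ m"
proof
  assume "(7::int) dvd 2 ^ m"
  hence "(7::int) dvd 2" using prime7 prime_dvd_power by blast
  thus False by simp
qed

lemma key21: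
  "k \<ge> 1 \<Longrightarrow> \<exists>j x y. j \<ge> 1 \<and> AA (21*k) = 2^(21*k) + 7^(j+1) * x \<and> BB (21*k) = 7^j * y \<and> \<not> 7 dvd y"
proof (induction k rule: less_induct)
  case (less k)
  have A21: "AA 21 = 2^21 + 7^(1+1) * 59768832" by (simp add: AA_def AB21)
  have B21: "BB 21 = 7^1 * 42991616" by (simp add: BB_def AB21)
  show ?case
  proof (cases "7 dvd k")
    case True
    then obtain k' where k': "k = 7 * k'" by blast
    with less.prems have k'1: "k' \<ge> 1" "k' < k" by auto
    then obtain j x y where j: "j \<ge> 1" and hA: "AA (21*k') = 2^(21*k') + 7^(j+1) * x"
      and hB: "BB (21*k') = 7^j * y" and ny: "\<not> 7 dvd y"
      using less.IH by blast
    obtain u w where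
      u: "AA (7*(21*k')) = 2^(7*(21*k')) + int 7 * 2^((21*k')*(7-1)) * 7^(j+1) * x + 7^(j+2)*u" and
      w: "BB (7*(21*k')) = int 7 * 2^((21*k')*(7-1)) * 7^j * y + 7^(j+2) * w"
      using pow_step[OF j hA hB, of 7] by auto
    define c :: int where "c = 2^((21*k')*6)"
    have e: "21 * k = 7*(21*k')" using k' by simp
    have "AA (21*k) = 2^(21*k) + 7^(j+1+1) * (c * x + u)"
      using u unfolding e c_def by (simp add: algebra_simps)
    moreover have "BB (21*k) = 7^(j+1) * (c * y + 7 * w)"
      using w unfolding e c_def by (simp add: algebra_simps)
    moreover have "\<not> 7 dvd (c * y + 7 * w)"
    proof
      assume "7 dvd (c * y + 7 * w)"
      hence "(7::int) dvd c * y" by (simp add: dvd_add_left_iff)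
      hence "(7::int) dvd c \<or> 7 dvd y" using prime7 prime_dvd_mult_iff by blast
      thus False using ny not7_pow2 c_def by blast
    qed
    ultimately show ?thesis using j by (intro exI[of _ "j+1"] exI[of _ "c * x + u"] exI[of _ "c * y + 7 * w"]) auto
  next
    case False
    obtain u w where
      u: "AA (k*21) = 2^(k*21) + int k * 2^(21*(k-1)) * 7^(1+1) * 59768832 + 7^(1+2)*u" and
      w: "BB (k*21) = int k * 2^(21*(k-1)) * 7^1 * 42991616 + 7^(1+2) * w"
      using pow_step[OF _ A21 B21, of k] less.prems by auto
    define c :: int where "c = 2^(21*(k-1))"
    have "AA (21*k) = 2^(21*k) + 7^(1+1) * (int k * c * 59768832 + 7 * u)"
      using u unfolding c_def by (simp add: algebra_simps)
    moreover have "BB (21*k) = 7^1 * (int k * c * 42991616 + 49 * w)"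
      using w unfolding c_def by (simp add: algebra_simps)
    moreover have "\<not> 7 dvd (int k * c * 42991616 + 49 * w)"
    proof
      assume "7 dvd (int k * c * 42991616 + 49 * w)"
      hence "(7::int) dvd int k * c * 42991616" by (simp add: dvd_add_left_iff)
      hence "(7::int) dvd int k \<or> 7 dvd c \<or> (7::int) dvd 42991616"
        using prime7 prime_dvd_mult_iff by metis
      moreover have "\<not> (7::int) dvd int k" using False by presburger
      ultimately show False using not7_pow2 c_def by auto
    qed
    ultimately show ?thesis by (intro exI[of _ 1] exI[of _ "int k * c * 59768832 + 7 * u"] exI[of _ "int k * c * 42991616 + 49 * w"]) auto
  qed
qed

lemma main_aux:
  assumes "m1 < m2" and "42 dvd (m2 - m1)"
    and h1: "2 * BB m1 = - (2 ^ m1)" and h2: "2 * BB m2 = - (2 ^ m2)"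
  shows False
proof -
  define n where "n = m2 - m1"
  have "(21::nat) dvd 42" by simp
  hence "21 dvd n" using assms(2) unfolding n_def by (rule dvd_trans)
  then obtain k where k: "n = 21 * k" by (rule dvdE)
  have "k \<ge> 1" using k assms(1) n_def by (cases k) auto
  then obtain j x y where hA: "AA n = 2^n + 7^(j+1) * x" and hB: "BB n = 7^j * y" and ny: "\<not> 7 dvd y"
    using key21 k by blast
  have m2: "m2 = m1 + n" using assms(1) n_def by simp
  have "BB m2 = AA m1 * BB n + BB m1 * AA n" using add_formula[of m1 n] m2 by simp
  hence "2 * (AA m1 * BB n + BB m1 * AA n) = - (2 ^ m1 * 2 ^ n)" using h2 m2 by (simp add: power_add)
  also have "\<dots> = 2 * BB m1 * 2^n" using h1 by simp
  finally have "AA m1 * BB n + BB m1 * AA n = BB m1 * 2^n" by simp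
  hence "AA m1 * (7^j * y) + BB m1 * (7^(j+1) * x) = 0" using hA hB by (simp add: algebra_simps)
  hence "7^j * (AA m1 * y + 7 * BB m1 * x) = 0" by (simp add: algebra_simps)
  hence "AA m1 * y = - (7 * BB m1 * x)" by simp
  hence "(7::int) dvd AA m1 * y" by simp
  hence "(7::int) dvd AA m1" using ny prime7 prime_dvd_mult_iff by blast
  moreover have "[AA m1 = 1] (mod 7)" by (rule AA_mod)
  ultimately have "(7::int) dvd 1" by (metis cong_dvd_iff)
  thus False by simp
qed

theorem mainTheorem4:
  fixes m1 m2 :: nat
  assumes "odd m1" and "odd m2" and "m1 \<ge> 3" and "m2 \<ge> 3"
    and "[m1 = m2] (mod 42)"
    and "1 - 2 * theta = theta ^ m1 - theta' ^ m1"
    and "1 - 2 * theta = theta ^ m2 - theta' ^ m2"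
  shows "m1 = m2"
proof (rule ccontr)
  assume ne: "m1 \<noteq> m2"
  have h1: "2 * BB m1 = - (2 ^ m1)" using assms(6) by (rule hyp_transform)
  have h2: "2 * BB m2 = - (2 ^ m2)" using assms(7) by (rule hyp_transform)
  show False
  proof (cases "m1 < m2")
    case True
    have "42 dvd (m2 - m1)" using assms(5) True
      by (metis cong_altdef_nat cong_sym less_imp_le)
    then show False using main_aux True h1 h2 by blast
  next
    case False
    hence lt: "m2 < m1" using ne by simp
    have "42 dvd (m1 - m2)" using assms(5) lt
      by (metis cong_altdef_nat less_imp_le)
    then show False using main_aux lt h1 h2 by blast
  qed
qed

end
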